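(* Let $J^\star$ be the optimal cost function of the belief MDP with true parameter $\bm{\theta}$, $\overline{J}^\star$ that of the belief MDP with conjectured parameter $\overline{\bm{\theta}}$, and $\tilde J(\mathbf{b})=V^\star(\Phi(\mathbf{b}))$ the quantized approximation built from the conjectured model (see context). Suppose $\alpha\in[0,2]$ satisfies $\sum_{\mathbf{b}'\in\mathcal{B}}|p_{\bm{\theta}}(\mathbf{b}'\mid\mathbf{b},a)-p_{\overline{\bm{\theta}}}(\mathbf{b}'\mid\mathbf{b},a)|\le\alpha$ for all $\mathbf{b}\in\mathcal{B},a\in\mathcal{A}$. Let $c_{\max}=\max_{\mathbf{b}\in\mathcal{B},a\in\mathcal{A}}\hat c(\mathbf{b},a)$ and $\epsilon=\max_{\tilde{\mathbf{b}}\in\tilde{\mathcal{B}}}\sup_{\mathbf{b},\mathbf{b}'\in S_{\tilde{\mathbf{b}}}}|\overline{J}^\star(\mathbf{b})-\overline{J}^\star(\mathbf{b}')|$, where $S_{\tilde{\mathbf{b}}}=\{\mathbf{b}\in\mathcal{B}:\Phi(\mathbf{b})=\tilde{\mathbf{b}}\}$. Then $$\|\tilde J-J^\star\|_\infty\le\frac{\epsilon}{1-\gamma}+\frac{\gamma\alpha c_{\max}}{(1-\gamma)^2}.$$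
   Context: A POMDP has finite state space $\mathcal{S}=\{1,\dots,n\}$, finite action and observation spaces, costs $c(s,a)$ and discount factor $\gamma\in(0,1)$. Its belief MDP has state space $\mathcal{B}$ (the probability simplex over $\mathcal{S}$), cost $\hat c(\mathbf{b},a)=\sum_s\mathbf{b}(s)c(s,a)$, and belief transition probabilities $p_{\bm{\theta}'}(\mathbf{b}'\mid\mathbf{b},a)$ depending on a parameter vector $\bm{\theta}'$ (nonzero for finitely many $\mathbf{b}'$ given $\mathbf{b},a$). For $\bm{\theta}'\in\{\bm{\theta},\overline{\bm{\theta}}\}$ the optimal discounted cost function satisfies the Bellman equation $J(\mathbf{b})=\min_a[\hat c(\mathbf{b},a)+\gamma\sum_{\mathbf{b}'}p_{\bm{\theta}'}(\mathbf{b}'\mid\mathbf{b},a)J(\mathbf{b}')]$; these are $J^\star$ (for $\bm{\theta}$) and $\overline{J}^\star$ (for $\overline{\bm{\theta}}$). For a resolution $r\in\{1,2,\dots\}$, $\tilde{\mathcal{B}}=\{\tilde{\mathbf{b}}\in\mathcal{B}:\tilde{\mathbf{b}}(s)=\beta_s/r,\ \beta_s\in\{0,\dots,r\},\ \sum_s\beta_s=r\}$ and $\Phi(\mathbf{b})=\arg\min_{\tilde{\mathbf{b}}\in\tilde{\mathcal{B}}}\|\mathbf{b}-\tilde{\mathbf{b}}\|_\infty$ (ties broken consistently). The quantized MDP has state space $\tilde{\mathcal{B}}$, cost $\hat c$, transitions $\hat p_{\overline{\bm{\theta}}}(\tilde{\mathbf{b}}'\mid\tilde{\mathbf{b}},a)=\sum_{\mathbf{b}'}p_{\overline{\bm{\theta}}}(\mathbf{b}'\mid\tilde{\mathbf{b}},a)\delta_{\tilde{\mathbf{b}}'\Phi(\mathbf{b}')}$,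 discount $\gamma$, and optimal cost function $V^\star$. *)

theory Defs
  imports Complex_Main
begin

text \<open>States are indexed by a finite type 's (so n = CARD('s)); beliefs are functions 's => real.\<close>

definition belief_simplex :: "('s::finite \<Rightarrow> real) set" where
  "belief_simplex = {b. (\<forall>s. 0 \<le> b s) \<and> (\<Sum>s\<in>UNIV. b s) = 1}"

definition grid :: "nat \<Rightarrow> ('s::finite \<Rightarrow> real) set" where
  "grid r = {b \<in> belief_simplex. \<forall>s. \<exists>\<beta>::nat. \<beta> \<le> r \<and> b s = real \<beta> / real r}"

definition dist_inf :: "('s::finite \<Rightarrow> real) \<Rightarrow> ('s \<Rightarrow> real) \<Rightarrow> real" where
  "dist_inf b b' = Max (range (\<lambda>s. \<bar>b s - b' s\<bar>))"

definition is_quantizer :: "nat \<Rightarrow> (('s::finite \<Rightarrow> real) \<Rightarrow> ('s \<Rightarrow> real)) \<Rightarrow> bool" where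
  "is_quantizer r \<Phi> \<longleftrightarrow> (\<forall>b\<in>belief_simplex. \<Phi> b \<in> grid r \<and>
      (\<forall>bt\<in>grid r. dist_inf b (\<Phi> b) \<le> dist_inf b bt))"

definition chat :: "('s::finite \<Rightarrow> 'a \<Rightarrow> real) \<Rightarrow> ('s \<Rightarrow> real) \<Rightarrow> 'a \<Rightarrow> real" where
  "chat c b a = (\<Sum>s\<in>UNIV. b s * c s a)"

definition ksupp :: "(('s \<Rightarrow> real) \<Rightarrow> 'a \<Rightarrow> ('s \<Rightarrow> real) \<Rightarrow> real) \<Rightarrow> ('s \<Rightarrow> real) \<Rightarrow> 'a \<Rightarrow> ('s \<Rightarrow> real) set" where
  "ksupp p b a = {b'. p b a b' \<noteq> 0}"

definition is_belief_kernel :: "(('s::finite \<Rightarrow> real) \<Rightarrow> 'a \<Rightarrow> ('s \<Rightarrow> real) \<Rightarrow> real) \<Rightarrow> bool" where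
  "is_belief_kernel p \<longleftrightarrow> (\<forall>b\<in>belief_simplex. \<forall>a.
      finite (ksupp p b a) \<and> ksupp p b a \<subseteq> belief_simplex \<and>
      (\<forall>b'. 0 \<le> p b a b') \<and> (\<Sum>b'\<in>ksupp p b a. p b a b') = 1)"

definition expect :: "(('s \<Rightarrow> real) \<Rightarrow> 'a \<Rightarrow> ('s \<Rightarrow> real) \<Rightarrow> real) \<Rightarrow> ('s \<Rightarrow> real) \<Rightarrow> 'a \<Rightarrow> (('s \<Rightarrow> real) \<Rightarrow> real) \<Rightarrow> real" where
  "expect p b a f = (\<Sum>b'\<in>ksupp p b a. p b a b' * f b')"

definition is_optimal_cost :: "('s::finite \<Rightarrow> 'a::finite \<Rightarrow> real) \<Rightarrow> real \<Rightarrow> (('s \<Rightarrow> real) \<Rightarrow> 'a \<Rightarrow> ('s \<Rightarrow> real) \<Rightarrow> real) \<Rightarrow> (('s \<Rightarrow> real) \<Rightarrow> real) \<Rightarrow> bool" where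
  "is_optimal_cost c \<gamma> p J \<longleftrightarrow> (\<exists>M. \<forall>b\<in>belief_simplex. \<bar>J b\<bar> \<le> M) \<and>
     (\<forall>b\<in>belief_simplex. J b = Min (range (\<lambda>a. chat c b a + \<gamma> * expect p b a J)))"

definition phat :: "(('s \<Rightarrow> real) \<Rightarrow> 'a \<Rightarrow> ('s \<Rightarrow> real) \<Rightarrow> real) \<Rightarrow> (('s \<Rightarrow> real) \<Rightarrow> ('s \<Rightarrow> real)) \<Rightarrow> ('s \<Rightarrow> real) \<Rightarrow> 'a \<Rightarrow> ('s \<Rightarrow> real) \<Rightarrow> real" where
  "phat p \<Phi> bt a bt' = (\<Sum>b'\<in>ksupp p bt a. p bt a b' * (if \<Phi> b' = bt' then 1 else 0))"

definition is_quantized_optimal :: "('s::finite \<Rightarrow> 'a::finite \<Rightarrow> real) \<Rightarrow> real \<Rightarrow> (('s \<Rightarrow> real) \<Rightarrow> 'a \<Rightarrow> ('s \<Rightarrow> real) \<Rightarrow> real) \<Rightarrow> (('s \<Rightarrow> real) \<Rightarrow> ('s \<Rightarrow> real)) \<Rightarrow> nat \<Rightarrow> (('s \<Rightarrow> real) \<Rightarrow> real) \<Rightarrow> bool" where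
  "is_quantized_optimal c \<gamma> p \<Phi> r V \<longleftrightarrow> (\<forall>bt\<in>grid r.
     V bt = Min (range (\<lambda>a. chat c bt a + \<gamma> * (\<Sum>bt'\<in>grid r. phat p \<Phi> bt a bt' * V bt'))))"

end

theory Submission
  imports Defs
begin

lemma sup_contract:
  fixes g :: "'x \<Rightarrow> real"
  assumes "S \<noteq> {}" "bdd_above (g ` S)" "\<forall>x\<in>S. g x \<le> \<gamma> * (SUP y\<in>S. g y) + K" "\<gamma> < 1"
  shows "\<forall>x\<in>S. g x \<le> K / (1 - \<gamma>)"
proof
  fix x assume x: "x \<in> S"
  define D where "D = (SUP y\<in>S. g y)"
  have "D \<le> \<gamma> * D + K" unfolding D_def
    by (rule cSUP_least) (use assms in auto)
  then have "D \<le> K / (1 - \<gamma>)" using assms(4) by (simp add: pos_le_divide_eq algebra_simps)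
  moreover have "g x \<le> D" unfolding D_def using cSUP_upper[OF x assms(2)] .
  ultimately show "g x \<le> K / (1 - \<gamma>)" by linarith
qed

lemma exp_le:
  assumes "is_belief_kernel p" "b \<in> belief_simplex" "\<forall>y\<in>belief_simplex. f y \<le> U"
  shows "expect p b a f \<le> U"
proof -
  have k: "finite (ksupp p b a)" "ksupp p b a \<subseteq> belief_simplex" "\<forall>b'. 0 \<le> p b a b'"
     "(\<Sum>b'\<in>ksupp p b a. p b a b') = 1"
    using assms(1,2) unfolding is_belief_kernel_def by auto
  have "expect p b a f \<le> (\<Sum>b'\<in>ksupp p b a. p b a b' * U)"
    unfolding expect_def
    by (rule sum_mono) (use k assms(3) in \<open>auto intro: mult_left_mono\<close>)
  also have "\<dots> = U" using k(4) by (simp add: sum_distrib_right[symmetric])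
  finally show ?thesis .
qed

lemma exp_neg: "expect p b a (\<lambda>y. - f y) = - expect p b a f"
  unfolding expect_def by (simp add: sum_negf)

lemma exp_diff: "expect p b a f - expect p b a g = expect p b a (\<lambda>y. f y - g y)"
  unfolding expect_def by (simp add: sum_subtractf right_diff_distrib)

lemma exp_abs:
  assumes "is_belief_kernel p" "b \<in> belief_simplex" "\<forall>y\<in>belief_simplex. \<bar>f y\<bar> \<le> U"
  shows "\<bar>expect p b a f\<bar> \<le> U"
proof -
  have "expect p b a f \<le> U" using exp_le[OF assms(1,2)] assms(3) by (meson abs_le_D1)
  moreover have "expect p b a (\<lambda>y. - f y) \<le> U" using exp_le[OF assms(1,2)] assms(3) by (meson abs_le_D2)
  ultimately show ?thesis by (simp add: exp_neg)
qed

lemma min_attained: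
  fixes F :: "'a::finite \<Rightarrow> real"
  shows "\<exists>a. Min (range F) = F a"
proof -
  have "Min (range F) \<in> range F" by (intro Min_in; simp)
  then show ?thesis by (metis imageE)
qed

lemma min_diff:
  fixes F G :: "'a::finite \<Rightarrow> real"
  assumes "\<forall>a. \<bar>F a - G a\<bar> \<le> d"
  shows "\<bar>Min (range F) - Min (range G)\<bar> \<le> d"
proof -
  have "Min (range F) \<in> range F" "Min (range G) \<in> range G" by (intro Min_in; simp)+
  then obtain a1 a2 where a1: "Min (range F) = F a1" and a2: "Min (range G) = G a2" by (metis imageE)
  have "Min (range F) \<le> F a2" "Min (range G) \<le> G a1" by auto
  then show ?thesis using assms[rule_format, of a1] assms[rule_format, of a2] a1 a2 by linarith
qed

lemma grid_finite: "finite (grid r :: ('s::finite \<Rightarrow> real) set)"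
proof -
  have "grid r \<subseteq> {f. \<forall>x. (x \<in> (UNIV::'s set) \<longrightarrow> f x \<in> (\<lambda>\<beta>. real \<beta> / real r) ` {..r}) \<and> (x \<notin> UNIV \<longrightarrow> f x = 0)}"
    unfolding grid_def by auto
  moreover have "finite \<dots>" by (rule finite_set_of_finite_funs) auto
  ultimately show ?thesis by (rule finite_subset)
qed

lemma grid_simplex: "grid r \<subseteq> belief_simplex"
  unfolding grid_def by auto

lemma quant_fix:
  assumes "is_quantizer r \<Phi>" "bt \<in> grid r"
  shows "\<Phi> bt = bt"
proof
  fix s
  have bs: "bt \<in> belief_simplex" using assms(2) grid_simplex by auto
  have "dist_inf bt (\<Phi> bt) \<le> dist_inf bt bt" using assms bs unfolding is_quantizer_def by auto
  also have "dist_inf bt bt = 0" unfolding dist_inf_def by simp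
  finally have "\<bar>bt s - \<Phi> bt s\<bar> \<le> 0"
    using Max_ge[of "range (\<lambda>s. \<bar>bt s - \<Phi> bt s\<bar>)" "\<bar>bt s - \<Phi> bt s\<bar>"] unfolding dist_inf_def by auto
  then show "\<Phi> bt s = bt s" by simp
qed

lemma simplex_ne: "(belief_simplex :: ('s::finite \<Rightarrow> real) set) \<noteq> {}"
proof -
  obtain s0 :: 's where True by auto
  have "(\<lambda>s. if s = s0 then 1 else 0 :: real) \<in> (belief_simplex :: ('s::finite \<Rightarrow> real) set)"
    unfolding belief_simplex_def by simp
  then show ?thesis by auto
qed

lemma le_one: assumes "b \<in> belief_simplex" shows "b s \<le> 1"
proof -
  have "b s \<le> (\<Sum>s\<in>UNIV. b s)" by (rule member_le_sum) (use assms in \<open>auto simp: belief_simplex_def\<close>)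
  then show ?thesis using assms by (simp add: belief_simplex_def)
qed

lemma mismatch:
  assumes "is_belief_kernel p" "is_belief_kernel q" "b \<in> belief_simplex" "0 \<le> K"
    "\<forall>y\<in>belief_simplex. \<bar>f y\<bar> \<le> K"
    "(\<Sum>b'\<in>ksupp p b a \<union> ksupp q b a. \<bar>p b a b' - q b a b'\<bar>) \<le> \<alpha>"
  shows "\<bar>expect p b a f - expect q b a f\<bar> \<le> \<alpha> * K"
proof -
  let ?U = "ksupp p b a \<union> ksupp q b a"
  have kp: "finite (ksupp p b a)" "ksupp p b a \<subseteq> belief_simplex"
    using assms(1,3) unfolding is_belief_kernel_def by auto
  have kq: "finite (ksupp q b a)" "ksupp q b a \<subseteq> belief_simplex"
    using assms(2,3) unfolding is_belief_kernel_def by auto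
  have fU: "finite ?U" using kp kq by auto
  have ep: "expect p b a f = (\<Sum>y\<in>?U. p b a y * f y)" unfolding expect_def
    by (rule sum.mono_neutral_left) (use fU in \<open>auto simp: ksupp_def\<close>)
  have eq: "expect q b a f = (\<Sum>y\<in>?U. q b a y * f y)" unfolding expect_def
    by (rule sum.mono_neutral_left) (use fU in \<open>auto simp: ksupp_def\<close>)
  have "\<bar>expect p b a f - expect q b a f\<bar> = \<bar>\<Sum>y\<in>?U. (p b a y - q b a y) * f y\<bar>"
    by (simp add: ep eq sum_subtractf left_diff_distrib)
  also have "\<dots> \<le> (\<Sum>y\<in>?U. \<bar>(p b a y - q b a y) * f y\<bar>)" by (rule sum_abs)
  also have "\<dots> \<le> (\<Sum>y\<in>?U. \<bar>p b a y - q b a y\<bar> * K)"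
  proof (rule sum_mono)
    fix y assume "y \<in> ?U"
    then have "\<bar>f y\<bar> \<le> K" using assms(5) kp kq by auto
    then show "\<bar>(p b a y - q b a y) * f y\<bar> \<le> \<bar>p b a y - q b a y\<bar> * K"
      by (simp add: abs_mult mult_left_mono)
  qed
  also have "\<dots> = (\<Sum>y\<in>?U. \<bar>p b a y - q b a y\<bar>) * K" by (simp add: sum_distrib_right)
  also have "\<dots> \<le> \<alpha> * K" using assms(4,6) by (simp add: mult_right_mono)
  finally show ?thesis .
qed

lemma phat_sum:
  assumes "is_belief_kernel p" "bt \<in> belief_simplex" "is_quantizer r \<Phi>"
  shows "(\<Sum>bt'\<in>grid r. phat p \<Phi> bt a bt' * V bt') = expect p bt a (\<lambda>y. V (\<Phi> y))"
proof -
  have k: "finite (ksupp p bt a)" "ksupp p bt a \<subseteq> belief_simplex"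
    using assms(1,2) unfolding is_belief_kernel_def by auto
  have "(\<Sum>bt'\<in>grid r. phat p \<Phi> bt a bt' * V bt')
      = (\<Sum>bt'\<in>grid r. \<Sum>b'\<in>ksupp p bt a. p bt a b' * (if \<Phi> b' = bt' then 1 else 0) * V bt')"
    unfolding phat_def by (simp add: sum_distrib_right)
  also have "\<dots> = (\<Sum>b'\<in>ksupp p bt a. \<Sum>bt'\<in>grid r. p bt a b' * (if \<Phi> b' = bt' then 1 else 0) * V bt')"
    by (rule sum.swap)
  also have "\<dots> = (\<Sum>b'\<in>ksupp p bt a. p bt a b' * V (\<Phi> b'))"
  proof (rule sum.cong)
    fix b' assume "b' \<in> ksupp p bt a"
    then have "\<Phi> b' \<in> grid r" using k assms(3) unfolding is_quantizer_def by auto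
    then show "(\<Sum>bt'\<in>grid r. p bt a b' * (if \<Phi> b' = bt' then 1 else 0) * V bt') = p bt a b' * V (\<Phi> b')"
    proof -
      have "(\<Sum>bt'\<in>grid r. p bt a b' * (if \<Phi> b' = bt' then 1 else 0) * V bt')
          = (\<Sum>bt'\<in>grid r. if \<Phi> b' = bt' then p bt a b' * V bt' else 0)"
        by (rule sum.cong) auto
      also have "\<dots> = p bt a b' * V (\<Phi> b')" using grid_finite[of r] \<open>\<Phi> b' \<in> grid r\<close>
        by (metis (mono_tags) sum.delta' grid_finite)
      finally show ?thesis .
    qed
  qed simp
  finally show ?thesis unfolding expect_def .
qed

theorem theorem4p5:
  fixes c :: "'s::finite \<Rightarrow> 'a::finite \<Rightarrow> real"
    and p :: "'t \<Rightarrow> ('s \<Rightarrow> real) \<Rightarrow> 'a \<Rightarrow> ('s \<Rightarrow> real) \<Rightarrow> real"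
    and \<theta> \<theta>bar :: 't
    and \<gamma> \<alpha> :: real and r :: nat
    and \<Phi> :: "('s \<Rightarrow> real) \<Rightarrow> ('s \<Rightarrow> real)"
    and J Jbar V :: "('s \<Rightarrow> real) \<Rightarrow> real"
  assumes "0 < \<gamma>" "\<gamma> < 1"
    and "\<forall>s a. 0 \<le> c s a"
    and "is_belief_kernel (p \<theta>)" "is_belief_kernel (p \<theta>bar)"
    and "is_optimal_cost c \<gamma> (p \<theta>) J"
    and "is_optimal_cost c \<gamma> (p \<theta>bar) Jbar"
    and "1 \<le> r" "is_quantizer r \<Phi>"
    and "is_quantized_optimal c \<gamma> (p \<theta>bar) \<Phi> r V"
    and "0 \<le> \<alpha>" "\<alpha> \<le> 2"
    and "\<forall>b\<in>belief_simplex. \<forall>a.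
           (\<Sum>b'\<in>ksupp (p \<theta>) b a \<union> ksupp (p \<theta>bar) b a. \<bar>p \<theta> b a b' - p \<theta>bar b a b'\<bar>) \<le> \<alpha>"
  shows "let cmax = Sup {chat c b a | b a. b \<in> belief_simplex};
             S = (\<lambda>bt. {b \<in> belief_simplex. \<Phi> b = bt});
             eps = Max ((\<lambda>bt. SUP bb\<in>S bt \<times> S bt. \<bar>Jbar (fst bb) - Jbar (snd bb)\<bar>) ` grid r)
         in \<forall>b\<in>belief_simplex. \<bar>V (\<Phi> b) - J b\<bar> \<le> eps / (1 - \<gamma>) + \<gamma> * \<alpha> * cmax / (1 - \<gamma>)^2"
proof -
  note kp = assms(4) and kq = assms(5)
  define B where "B = (belief_simplex :: ('s \<Rightarrow> real) set)"
  define cmax where "cmax = Sup {chat c b a | b a. b \<in> belief_simplex}"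
  define S where "S = (\<lambda>bt. {b \<in> belief_simplex. \<Phi> b = bt})"
  define eps where "eps = Max ((\<lambda>bt. SUP bb\<in>S bt \<times> S bt. \<bar>Jbar (fst bb) - Jbar (snd bb)\<bar>) ` grid r)"
  have Bne: "B \<noteq> {}" unfolding B_def by (rule simplex_ne)
  obtain M where M: "\<forall>b\<in>B. \<bar>Jbar b\<bar> \<le> M" using assms(7) unfolding is_optimal_cost_def B_def by blast
  obtain MJ where MJ: "\<forall>b\<in>B. \<bar>J b\<bar> \<le> MJ" using assms(6) unfolding is_optimal_cost_def B_def by blast
  have JbarB: "\<forall>b\<in>B. Jbar b = Min (range (\<lambda>a. chat c b a + \<gamma> * expect (p \<theta>bar) b a Jbar))"
    using assms(7) unfolding is_optimal_cost_def B_def by blast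
  have JB: "\<forall>b\<in>B. J b = Min (range (\<lambda>a. chat c b a + \<gamma> * expect (p \<theta>) b a J))"
    using assms(6) unfolding is_optimal_cost_def B_def by blast
  have chat_ge: "0 \<le> chat c b a" if "b \<in> B" for b a
  proof -
    have "b \<in> belief_simplex" using that B_def by simp
    then have "\<forall>s. 0 \<le> b s" by (simp add: belief_simplex_def)
    then show ?thesis unfolding chat_def using assms(3) by (intro sum_nonneg) simp
  qed
  have bdd: "bdd_above {chat c b a | b a. b \<in> belief_simplex}"
  proof (rule bdd_aboveI)
    fix x assume "x \<in> {chat c b a | b a. b \<in> belief_simplex}"
    then obtain b a where x: "x = chat c b a" and b: "b \<in> belief_simplex" by auto
    have "x \<le> (\<Sum>s\<in>UNIV. 1 * c s a)" unfolding x chat_def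
      by (rule sum_mono, rule mult_right_mono) (use b le_one assms(3) in auto)
    also have "\<dots> \<le> (\<Sum>s\<in>UNIV. \<Sum>a'\<in>UNIV. c s a')"
      by (rule sum_mono) (use assms(3) in \<open>auto intro: member_le_sum\<close>)
    finally show "x \<le> (\<Sum>s\<in>UNIV. \<Sum>a'\<in>UNIV. c s a')" .
  qed
  have chat_le: "chat c b a \<le> cmax" if "b \<in> B" for b a
  proof -
    have "b \<in> belief_simplex" using that B_def by simp
    then have "chat c b a \<in> {chat c b a | b a. b \<in> belief_simplex}" by blast
    then show ?thesis unfolding cmax_def using bdd by (rule cSup_upper)
  qed
  have bddJ1: "bdd_above ((\<lambda>y. Jbar y) ` B)"
  proof (rule bdd_aboveI[where M=M])
    fix z assume "z \<in> (\<lambda>y. Jbar y) ` B"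
    then obtain y where "y \<in> B" "z = Jbar y" by blast
    then show "z \<le> M" using M by (meson abs_le_D1)
  qed
  have bddJ2: "bdd_above ((\<lambda>y. - Jbar y) ` B)"
  proof (rule bdd_aboveI[where M=M])
    fix z assume "z \<in> (\<lambda>y. - Jbar y) ` B"
    then obtain y where "y \<in> B" "z = - Jbar y" by blast
    then show "z \<le> M" using M by (meson abs_le_D2)
  qed
  note bddJ = bddJ1 bddJ2
  have "\<forall>x\<in>B. - Jbar x \<le> 0 / (1 - \<gamma>)"
  proof (rule sup_contract[OF Bne bddJ(2) _ assms(2)], intro ballI)
    fix x assume x: "x \<in> B"
    define F where "F = (\<lambda>a. chat c x a + \<gamma> * expect (p \<theta>bar) x a Jbar)"
    obtain a where a0: "Min (range F) = F a" using min_attained by blast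
    have "Jbar x = Min (range F)" unfolding F_def using JbarB x by blast
    then have "Jbar x = F a" using a0 by simp
    then have a: "Jbar x = chat c x a + \<gamma> * expect (p \<theta>bar) x a Jbar" unfolding F_def .
    have "expect (p \<theta>bar) x a (\<lambda>y. - Jbar y) \<le> (SUP y\<in>B. - Jbar y)"
      by (rule exp_le[OF kq]) (use x B_def cSUP_upper[OF _ bddJ(2)] in auto)
    then have "\<gamma> * expect (p \<theta>bar) x a (\<lambda>y. - Jbar y) \<le> \<gamma> * (SUP y\<in>B. - Jbar y)"
      using assms(1) by (simp add: mult_left_mono)
    then show "- Jbar x \<le> \<gamma> * (SUP y\<in>B. - Jbar y) + 0" using a chat_ge[OF x, of a] by (simp add: exp_neg)
  qed
  then have Jnn: "\<forall>x\<in>B. 0 \<le> Jbar x" by simp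
  have Jup: "\<forall>x\<in>B. Jbar x \<le> cmax / (1 - \<gamma>)"
  proof (rule sup_contract[OF Bne bddJ(1) _ assms(2)], intro ballI)
    fix x assume x: "x \<in> B"
    obtain a :: 'a where True by auto
    have "Jbar x = Min (range (\<lambda>a. chat c x a + \<gamma> * expect (p \<theta>bar) x a Jbar))" using JbarB x by blast
    also have "\<dots> \<le> chat c x a + \<gamma> * expect (p \<theta>bar) x a Jbar" by (rule Min_le) auto
    finally have "Jbar x \<le> chat c x a + \<gamma> * expect (p \<theta>bar) x a Jbar" .
    moreover have "expect (p \<theta>bar) x a Jbar \<le> (SUP y\<in>B. Jbar y)"
      by (rule exp_le[OF kq]) (use x B_def cSUP_upper[OF _ bddJ(1)] in auto)
    then have "\<gamma> * expect (p \<theta>bar) x a Jbar \<le> \<gamma> * (SUP y\<in>B. Jbar y)"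
      using assms(1) by (simp add: mult_left_mono)
    ultimately show "Jbar x \<le> \<gamma> * (SUP y\<in>B. Jbar y) + cmax" using chat_le[OF x, of a] by linarith
  qed
  define K where "K = cmax / (1 - \<gamma>)"
  have Kabs: "\<forall>y\<in>B. \<bar>Jbar y\<bar> \<le> K" using Jnn Jup K_def by auto
  have K0: "0 \<le> K"
  proof -
    obtain y where y: "y \<in> B" using Bne by auto
    then show ?thesis using Kabs by (meson abs_ge_zero order_trans)
  qed
  have bddD: "bdd_above ((\<lambda>y. \<bar>J y - Jbar y\<bar>) ` B)"
  proof (rule bdd_aboveI[where M="MJ + M"])
    fix z assume "z \<in> (\<lambda>y. \<bar>J y - Jbar y\<bar>) ` B"
    then obtain y where "y \<in> B" "z = \<bar>J y - Jbar y\<bar>" by auto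
    moreover have "\<bar>J y\<bar> \<le> MJ" "\<bar>Jbar y\<bar> \<le> M" using M MJ \<open>y \<in> B\<close> by auto
    ultimately show "z \<le> MJ + M" by linarith
  qed
  have part2: "\<forall>x\<in>B. \<bar>J x - Jbar x\<bar> \<le> (\<gamma> * (\<alpha> * K)) / (1 - \<gamma>)"
  proof (rule sup_contract[OF Bne bddD _ assms(2)], intro ballI)
    fix x assume x: "x \<in> B"
    define D where "D = (SUP y\<in>B. \<bar>J y - Jbar y\<bar>)"
    have Dy: "\<forall>y\<in>belief_simplex. \<bar>J y - Jbar y\<bar> \<le> D"
      unfolding D_def using cSUP_upper[OF _ bddD] B_def by auto
    have "\<bar>J x - Jbar x\<bar> \<le> \<gamma> * (D + \<alpha> * K)"
      unfolding JB[rule_format, OF x] JbarB[rule_format, OF x]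
    proof (rule min_diff, rule allI)
      fix a
      have xs: "x \<in> belief_simplex" using x B_def by simp
      have e1: "\<bar>expect (p \<theta>) x a (\<lambda>y. J y - Jbar y)\<bar> \<le> D" by (rule exp_abs[OF kp xs Dy])
      have e2: "\<bar>expect (p \<theta>) x a Jbar - expect (p \<theta>bar) x a Jbar\<bar> \<le> \<alpha> * K"
        by (rule mismatch[OF kp kq xs K0]) (use Kabs B_def assms(13) xs in auto)
      have "\<bar>expect (p \<theta>) x a J - expect (p \<theta>bar) x a Jbar\<bar> \<le> D + \<alpha> * K"
        using e1 e2 exp_diff[of "p \<theta>" x a J Jbar] by linarith
      then have "\<gamma> * \<bar>expect (p \<theta>) x a J - expect (p \<theta>bar) x a Jbar\<bar> \<le> \<gamma> * (D + \<alpha> * K)"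
        using assms(1) by (simp add: mult_left_mono)
      then show "\<bar>(chat c x a + \<gamma> * expect (p \<theta>) x a J) - (chat c x a + \<gamma> * expect (p \<theta>bar) x a Jbar)\<bar> \<le> \<gamma> * (D + \<alpha> * K)"
        using assms(1) by (simp add: abs_mult right_diff_distrib[symmetric])
    qed
    then show "\<bar>J x - Jbar x\<bar> \<le> \<gamma> * D + \<gamma> * (\<alpha> * K)" by (simp add: algebra_simps)
  qed
  have gsub: "grid r \<subseteq> B" using grid_simplex B_def by auto
  have Phi_grid: "\<forall>y\<in>B. \<Phi> y \<in> grid r" using assms(9) B_def unfolding is_quantizer_def by auto
  have epsb: "\<forall>y\<in>B. \<bar>Jbar (\<Phi> y) - Jbar y\<bar> \<le> eps"
  proof
    fix y assume y: "y \<in> B"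
    let ?bt = "\<Phi> y"
    have bt: "?bt \<in> grid r" using Phi_grid y by auto
    have mem: "(?bt, y) \<in> S ?bt \<times> S ?bt" unfolding S_def
      using bt gsub y quant_fix[OF assms(9) bt] B_def by auto
    have bddS: "bdd_above ((\<lambda>bb. \<bar>Jbar (fst bb) - Jbar (snd bb)\<bar>) ` (S ?bt \<times> S ?bt))"
    proof (rule bdd_aboveI[where M="M + M"])
      fix z assume "z \<in> (\<lambda>bb. \<bar>Jbar (fst bb) - Jbar (snd bb)\<bar>) ` (S ?bt \<times> S ?bt)"
      then obtain u v where uv: "u \<in> B" "v \<in> B" "z = \<bar>Jbar u - Jbar v\<bar>" unfolding S_def B_def by auto
      moreover have "\<bar>Jbar u\<bar> \<le> M" "\<bar>Jbar v\<bar> \<le> M" using M uv by auto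
      ultimately show "z \<le> M + M" by linarith
    qed
    have "\<bar>Jbar (\<Phi> y) - Jbar y\<bar> \<le> (SUP bb\<in>S ?bt \<times> S ?bt. \<bar>Jbar (fst bb) - Jbar (snd bb)\<bar>)"
      using cSUP_upper[OF mem bddS] by simp
    also have "\<dots> \<le> eps" unfolding eps_def
      by (rule Max_ge) (use bt grid_finite in auto)
    finally show "\<bar>Jbar (\<Phi> y) - Jbar y\<bar> \<le> eps" .
  qed
  have gne: "grid r \<noteq> ({} :: ('s \<Rightarrow> real) set)"
  proof -
    obtain y where "y \<in> B" using Bne by auto
    then have "\<Phi> y \<in> grid r" using Phi_grid by auto
    then show ?thesis by auto
  qed
  have bddG: "bdd_above ((\<lambda>bt. \<bar>V bt - Jbar bt\<bar>) ` grid r)"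
    by (rule bdd_above_finite) (use grid_finite in auto)
  have part1g: "\<forall>bt\<in>grid r. \<bar>V bt - Jbar bt\<bar> \<le> (\<gamma> * eps) / (1 - \<gamma>)"
  proof (rule sup_contract[OF gne bddG _ assms(2)], intro ballI)
    fix bt :: "'s \<Rightarrow> real" assume bt: "bt \<in> grid r"
    define D where "D = (SUP y\<in>grid r. \<bar>V y - Jbar y\<bar>)"
    have bts: "bt \<in> belief_simplex" using bt gsub B_def by auto
    have Dy: "\<forall>y\<in>belief_simplex. \<bar>V (\<Phi> y) - Jbar y\<bar> \<le> D + eps"
    proof
      fix y :: "'s \<Rightarrow> real" assume y: "y \<in> belief_simplex"
      have "\<bar>V (\<Phi> y) - Jbar (\<Phi> y)\<bar> \<le> D" unfolding D_def
        by (rule cSUP_upper[OF _ bddG]) (use Phi_grid y B_def in auto)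
      moreover have "\<bar>Jbar (\<Phi> y) - Jbar y\<bar> \<le> eps" using epsb y B_def by auto
      ultimately show "\<bar>V (\<Phi> y) - Jbar y\<bar> \<le> D + eps" by linarith
    qed
    have Vbt: "V bt = Min (range (\<lambda>a. chat c bt a + \<gamma> * expect (p \<theta>bar) bt a (\<lambda>y. V (\<Phi> y))))"
    proof -
      have "V bt = Min (range (\<lambda>a. chat c bt a + \<gamma> * (\<Sum>bt'\<in>grid r. phat (p \<theta>bar) \<Phi> bt a bt' * V bt')))"
        using assms(10) bt unfolding is_quantized_optimal_def by blast
      then show ?thesis unfolding phat_sum[OF kq bts assms(9)] .
    qed
    have "\<bar>V bt - Jbar bt\<bar> \<le> \<gamma> * (D + eps)"
      unfolding Vbt JbarB[rule_format, OF gsub[THEN subsetD, OF bt]]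
    proof (rule min_diff, rule allI)
      fix a
      have e1: "\<bar>expect (p \<theta>bar) bt a (\<lambda>y. V (\<Phi> y) - Jbar y)\<bar> \<le> D + eps" by (rule exp_abs[OF kq bts Dy])
      then have "\<gamma> * \<bar>expect (p \<theta>bar) bt a (\<lambda>y. V (\<Phi> y)) - expect (p \<theta>bar) bt a Jbar\<bar> \<le> \<gamma> * (D + eps)"
        using assms(1) by (simp add: mult_left_mono exp_diff)
      then show "\<bar>(chat c bt a + \<gamma> * expect (p \<theta>bar) bt a (\<lambda>y. V (\<Phi> y))) - (chat c bt a + \<gamma> * expect (p \<theta>bar) bt a Jbar)\<bar> \<le> \<gamma> * (D + eps)"
        using assms(1) by (simp add: abs_mult right_diff_distrib[symmetric])
    qed
    then show "\<bar>V bt - Jbar bt\<bar> \<le> \<gamma> * D + \<gamma> * eps" by (simp add: algebra_simps)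
  qed
  have part1: "\<forall>y\<in>B. \<bar>V (\<Phi> y) - Jbar y\<bar> \<le> eps / (1 - \<gamma>)"
  proof
    fix y assume y: "y \<in> B"
    have "\<bar>V (\<Phi> y) - Jbar y\<bar> \<le> (\<gamma> * eps) / (1 - \<gamma>) + eps"
    proof -
      have "\<bar>V (\<Phi> y) - Jbar (\<Phi> y)\<bar> \<le> (\<gamma> * eps) / (1 - \<gamma>)" using part1g Phi_grid y by auto
      moreover have "\<bar>Jbar (\<Phi> y) - Jbar y\<bar> \<le> eps" using epsb y by auto
      ultimately show ?thesis by linarith
    qed
    also have "\<dots> = eps / (1 - \<gamma>)" using assms(2) by (simp add: field_simps)
    finally show "\<bar>V (\<Phi> y) - Jbar y\<bar> \<le> eps / (1 - \<gamma>)" .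
  qed
  have fin: "\<forall>b\<in>B. \<bar>V (\<Phi> b) - J b\<bar> \<le> eps / (1 - \<gamma>) + \<gamma> * \<alpha> * cmax / (1 - \<gamma>)^2"
  proof
    fix b assume b: "b \<in> B"
    have "(\<gamma> * (\<alpha> * K)) / (1 - \<gamma>) = \<gamma> * \<alpha> * cmax / (1 - \<gamma>)^2"
      unfolding K_def using assms(2) by (simp add: field_simps power2_eq_square)
    show "\<bar>V (\<Phi> b) - J b\<bar> \<le> eps / (1 - \<gamma>) + \<gamma> * \<alpha> * cmax / (1 - \<gamma>)^2"
    proof -
      have "\<bar>V (\<Phi> b) - Jbar b\<bar> \<le> eps / (1 - \<gamma>)" "\<bar>J b - Jbar b\<bar> \<le> (\<gamma> * (\<alpha> * K)) / (1 - \<gamma>)"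
        using part1 part2 b by auto
      then show ?thesis using \<open>(\<gamma> * (\<alpha> * K)) / (1 - \<gamma>) = \<gamma> * \<alpha> * cmax / (1 - \<gamma>)^2\<close> by linarith
    qed
  qed
  then show ?thesis unfolding Let_def cmax_def[symmetric] S_def[symmetric] eps_def[symmetric] B_def .
qed

end
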